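(* Assume the hypotheses of the Conjugacy result stated in the context, and let $\hat\Phi$ be as defined in the context. For every $x_0\in\mathbb{R}$, no two distinct points of $\hat\Phi^{-1}(x_0)$ can be joined by a horizontal curve in $\mathbb{R}^d$.
   Context: The hypotheses of the Conjugacy result are as follows. $F:\mathbb{T}^d\to\mathbb{T}^d$ is $C^1$ with $DF$ invertible everywhere, and $F(z)=(Mz+G(z))\bmod1$ with $M$ an integer matrix and $G$ continuous and $\mathbb{Z}^d$-periodic. $M$ has an integer eigenvalue $m$ with $|m|>1$, with right and left eigenvectors $v_m^R$ and $v_m^L$, where $v_m^L$ is chosen with integer entries. $F$ has a $(K,\alpha)$-cone system with respect to $w=v_m^R/|v_m^R|$ and $W=(v_m^L)^\perp$. Cone system: write each tangent vector as $v=aw+b=(a,b)$ with $b\in W$, and set $(a',b')=DF(z)v$. With $K>1$ and $\alpha>0$, for all $z$ and all $v$ with $|b|\le\alpha|a|$ one has $|b'|<\alpha|a'|$ and $|a'|>K|a|$; and $\|DF(z)u\|<K\|u\|$ for every $u$ outside the cone. A horizontal curve is a differentiable curve whose tangent vector at every point lies in the cone $\{(a,b):|b|<\alpha|a|\}$ at that point. Let $\hat F(x)=Mx+G(x)$ and $k=\min\{|v_m^L\cdot x|:x\in\mathbb{Z}^d,\ v_m^L\cdot x\ne0\}$. Define $\hat\Phi(x)=k^{-1}\lim_{n\to\infty}m^{-n}v_m^L\cdot\hat F^n(x)$; this limit exists and $\hat\Phi$ is continuous. *)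

theory Defs
  imports "HOL-Analysis.Analysis"
begin

text \<open>Vectors of R^d are rendered as real^'n (d = CARD('n)).
  Coordinates of the splitting v = a w + b with b in W = (vL)^perp:
  a = (vL . v)/(vL . w), b = v - a w (well defined when vL . w \<noteq> 0,
  i.e. when span w and W are complementary).\<close>

definition coneA :: "real^'n \<Rightarrow> real^'n \<Rightarrow> real^'n \<Rightarrow> real" where
  "coneA vL w v = (vL \<bullet> v) / (vL \<bullet> w)"

definition coneB :: "real^'n \<Rightarrow> real^'n \<Rightarrow> real^'n \<Rightarrow> real^'n" where
  "coneB vL w v = v - coneA vL w v *\<^sub>R w"

definition cone_system ::
  "(real^'n \<Rightarrow> real^'n^'n) \<Rightarrow> real^'n \<Rightarrow> real^'n \<Rightarrow> real \<Rightarrow> real \<Rightarrow> bool" where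
  "cone_system DF w vL K \<alpha> \<longleftrightarrow>
     K > 1 \<and> \<alpha> > 0 \<and> vL \<bullet> w \<noteq> 0 \<and>
     (\<forall>z v. v \<noteq> 0 \<and> norm (coneB vL w v) \<le> \<alpha> * \<bar>coneA vL w v\<bar> \<longrightarrow>
        norm (coneB vL w (DF z *v v)) < \<alpha> * \<bar>coneA vL w (DF z *v v)\<bar> \<and>
        \<bar>coneA vL w (DF z *v v)\<bar> > K * \<bar>coneA vL w v\<bar>) \<and>
     (\<forall>z u. \<not> (norm (coneB vL w u) \<le> \<alpha> * \<bar>coneA vL w u\<bar>) \<longrightarrow>
        norm (DF z *v u) < K * norm u)"

definition horizontal_curve_joining ::
  "real^'n \<Rightarrow> real^'n \<Rightarrow> real \<Rightarrow> (real \<Rightarrow> real^'n) \<Rightarrow> real^'n \<Rightarrow> real^'n \<Rightarrow> bool" where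
  "horizontal_curve_joining vL w \<alpha> \<gamma> p q \<longleftrightarrow>
     \<gamma> 0 = p \<and> \<gamma> 1 = q \<and>
     (\<forall>t\<in>{0..1}. \<exists>v. (\<gamma> has_vector_derivative v) (at t within {0..1}) \<and>
        norm (coneB vL w v) < \<alpha> * \<bar>coneA vL w v\<bar>)"

definition int_vec :: "real^'n \<Rightarrow> bool" where
  "int_vec x \<longleftrightarrow> (\<forall>i. x $ i \<in> \<int>)"

definition kmin :: "real^'n \<Rightarrow> real" where
  "kmin vL = Inf {\<bar>vL \<bullet> x\<bar> | x. int_vec x \<and> vL \<bullet> x \<noteq> 0}"

definition hatPhi ::
  "real^'n^'n \<Rightarrow> (real^'n \<Rightarrow> real^'n) \<Rightarrow> real^'n \<Rightarrow> int \<Rightarrow> real^'n \<Rightarrow> real" where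
  "hatPhi M G vL m x =
     (1 / kmin vL) * lim (\<lambda>n. (vL \<bullet> (((\<lambda>y. M *v y + G y) ^^ n) x)) / (real_of_int m) ^ n)"

end

theory Submission
  imports Defs
begin


lemma rolle_ratio:
  fixes f g f' g' :: "real \<Rightarrow> real"
  assumes df: "\<forall>t\<in>{0..1}. (f has_real_derivative f' t) (at t within {0..1})"
    and dg: "\<forall>t\<in>{0..1}. (g has_real_derivative g' t) (at t within {0..1})"
  shows "\<exists>z. 0 < z \<and> z < 1 \<and> (f 1 - f 0) * g' z = (g 1 - g 0) * f' z"
proof -
  define \<phi> where "\<phi> t = f t * (g 1 - g 0) - g t * (f 1 - f 0)" for t
  define D where "D t = f' t * (g 1 - g 0) - g' t * (f 1 - f 0)" for t
  have dphi: "(\<phi> has_real_derivative D t) (at t within {0..1})" if "t \<in> {0..1}" for t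
    unfolding \<phi>_def D_def using df dg that
    by (auto intro!: derivative_eq_intros)
  have cont: "continuous_on {0..1} \<phi>"
    using dphi continuous_on_eq_continuous_within DERIV_continuous by blast
  have dat: "(\<phi> has_derivative (\<lambda>v. D t * v)) (at t)" if "0 < t" "t < 1" for t
  proof -
    have "(\<phi> has_real_derivative D t) (at t within {0..1})" using dphi that by auto
    moreover have "at t within {0..1} = at t"
      using that by (intro at_within_interior) auto
    ultimately show ?thesis by (simp add: has_field_derivative_def mult_commute_abs)
  qed
  have "\<phi> 0 = \<phi> 1" unfolding \<phi>_def by (simp add: algebra_simps)
  from Rolle_deriv[OF _ this cont dat] obtain z where z: "0 < z" "z < 1" "(\<lambda>v. D z * v) = (\<lambda>v. 0)"
    by auto
  from fun_cong[OF z(3), of 1] have "D z = 0" by simp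
  then show ?thesis using z unfolding D_def by (intro exI[of _ z]) (auto simp: algebra_simps)
qed



lemma growth_bound:
  fixes E :: "nat \<Rightarrow> real" and m C :: real
  assumes rec: "\<forall>n. \<bar>E (Suc n) - m * E n\<bar> \<le> C" and m: "\<bar>m\<bar> > 1"
    and lim0: "(\<lambda>n. E n / m ^ n) \<longlonglongrightarrow> 0"
  shows "\<bar>E n\<bar> \<le> C / (\<bar>m\<bar> - 1)"
proof (rule ccontr)
  define R where "R = C / (\<bar>m\<bar> - 1)"
  assume "\<not> ?thesis"
  hence N: "\<bar>E n\<bar> > R" unfolding R_def by simp
  have mR: "(\<bar>m\<bar> - 1) * R = C" unfolding R_def using m by simp
  have key: "\<bar>E (n + j)\<bar> - R \<ge> \<bar>m\<bar> ^ j * (\<bar>E n\<bar> - R)" for j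
  proof (induction j)
    case 0 then show ?case by simp
  next
    case (Suc j)
    have am: "\<bar>m * E (n + j)\<bar> = \<bar>m\<bar> * \<bar>E (n + j)\<bar>" by (rule abs_mult)
    have h1: "\<bar>E (Suc (n + j))\<bar> \<ge> \<bar>m\<bar> * \<bar>E (n + j)\<bar> - C"
      using rec[rule_format, of "n+j"] am by linarith
    have "\<bar>E (Suc (n + j))\<bar> - R \<ge> \<bar>m\<bar> * (\<bar>E (n + j)\<bar> - R)"
    proof -
      have e1: "\<bar>m\<bar> * (\<bar>E (n + j)\<bar> - R) = \<bar>m\<bar> * \<bar>E (n + j)\<bar> - \<bar>m\<bar> * R"
        by (rule right_diff_distrib)
      have e2: "(\<bar>m\<bar> - 1) * R = \<bar>m\<bar> * R - R" by (simp add: left_diff_distrib)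
      show ?thesis using h1 e1 e2 mR by linarith
    qed
    also have "\<bar>m\<bar> * (\<bar>E (n + j)\<bar> - R) \<ge> \<bar>m\<bar> * (\<bar>m\<bar> ^ j * (\<bar>E n\<bar> - R))"
      using Suc m by (intro mult_left_mono) auto
    finally show ?case by (simp add: mult.assoc)
  qed
  define \<delta> where "\<delta> = (\<bar>E n\<bar> - R) / \<bar>m\<bar> ^ n"
  have dpos: "\<delta> > 0" unfolding \<delta>_def using N m by simp
  have low: "\<bar>E (n + j) / m ^ (n + j)\<bar> \<ge> \<delta>" for j
  proof -
    have mp: "\<bar>m\<bar> ^ (n + j) > 0" using m by simp
    have "\<delta> = \<bar>m\<bar> ^ j * (\<bar>E n\<bar> - R) / \<bar>m\<bar> ^ (n + j)"
      unfolding \<delta>_def using m by (simp add: power_add)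
    also have "\<dots> \<le> (\<bar>E (n + j)\<bar> - R) / \<bar>m\<bar> ^ (n + j)"
      using key[of j] mp by (intro divide_right_mono) auto
    also have "\<dots> \<le> \<bar>E (n + j)\<bar> / \<bar>m\<bar> ^ (n + j)"
    proof -
      have "R \<ge> 0" unfolding R_def using m rec[rule_format, of 0] by (intro divide_nonneg_pos) auto
      then show ?thesis using mp by (intro divide_right_mono) auto
    qed
    finally show ?thesis by (simp add: abs_divide power_abs)
  qed
  from lim0 dpos obtain no where no: "\<forall>k\<ge>no. norm (E k / m ^ k - 0) < \<delta>"
    unfolding LIMSEQ_iff by blast
  have "\<bar>E (n + no) / m ^ (n + no)\<bar> < \<delta>" using no by auto
  with low[of no] show False by simp
qed



lemma conv_lemma:
  fixes u :: "nat \<Rightarrow> real" and m C :: real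
  assumes rec: "\<forall>n. \<bar>u (Suc n) - m * u n\<bar> \<le> C" and m: "\<bar>m\<bar> > 1"
  shows "convergent (\<lambda>n. u n / m ^ n)"
proof -
  define L where "L n = u n / m ^ n" for n
  define d where "d j = L (Suc j) - L j" for j
  have m0: "m \<noteq> 0" using m by auto
  have dj: "d j = (u (Suc j) - m * u j) / m ^ Suc j" for j
    unfolding d_def L_def using m0 by (simp add: field_simps)
  have bd: "norm (d j) \<le> C * (1 / \<bar>m\<bar>) ^ Suc j" for j
  proof -
    have "norm (d j) = \<bar>u (Suc j) - m * u j\<bar> / \<bar>m\<bar> ^ Suc j"
      unfolding dj by (simp add: abs_divide power_abs abs_mult)
    also have "\<dots> \<le> C / \<bar>m\<bar> ^ Suc j"
      using rec m by (intro divide_right_mono) auto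
    finally show ?thesis by (simp add: power_one_over divide_inverse power_inverse)
  qed
  have "summable (\<lambda>j. C * (1 / \<bar>m\<bar>) ^ Suc j)"
    using m by (intro summable_mult summable_Suc_iff[THEN iffD2] summable_geometric) auto
  hence sd: "summable d" by (rule summable_comparison_test[rotated]) (use bd in blast)
  have Ln: "L n = L 0 + (\<Sum>j<n. d j)" for n
    unfolding d_def by (simp add: sum_lessThan_telescope)
  have "L = (\<lambda>n. L 0 + (\<Sum>j<n. d j))" by (rule ext, rule Ln)
  moreover have "(\<lambda>n. L 0 + (\<Sum>j<n. d j)) \<longlonglongrightarrow> L 0 + suminf d"
    using summable_LIMSEQ[OF sd] by (intro tendsto_add) auto
  ultimately show ?thesis unfolding L_def convergent_def by metis
qed





fun tang :: "(real^'n \<Rightarrow> real^'n^'n) \<Rightarrow> (real^'n \<Rightarrow> real^'n) \<Rightarrow> real^'n \<Rightarrow> real^'n \<Rightarrow> nat \<Rightarrow> real^'n" where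
  "tang DF F x v 0 = v"
| "tang DF F x v (Suc n) = DF ((F ^^ n) x) *v tang DF F x v n"

lemma iter_deriv:
  fixes F :: "real^'n \<Rightarrow> real^'n" and \<gamma> :: "real \<Rightarrow> real^'n"
  assumes dF: "\<forall>x. (F has_derivative (\<lambda>v. DF x *v v)) (at x)"
    and dg: "(\<gamma> has_vector_derivative v) (at t within S)"
  shows "((\<lambda>s. (F ^^ n) (\<gamma> s)) has_vector_derivative tang DF F (\<gamma> t) v n) (at t within S)"
proof (induction n)
  case 0 then show ?case using dg by simp
next
  case (Suc n)
  have "(F has_derivative (\<lambda>v. DF ((F ^^ n) (\<gamma> t)) *v v)) (at ((\<lambda>s. (F ^^ n) (\<gamma> s)) t) within (\<lambda>s. (F ^^ n) (\<gamma> s)) ` S)"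
    by (rule has_derivative_at_withinI[OF dF[rule_format]])
  from vector_derivative_diff_chain_within[OF Suc this]
  have ch: "((F \<circ> (\<lambda>s. (F ^^ n) (\<gamma> s))) has_vector_derivative DF ((F ^^ n) (\<gamma> t)) *v tang DF F (\<gamma> t) v n) (at t within S)" .
  have eq: "(\<lambda>s. (F ^^ Suc n) (\<gamma> s)) = F \<circ> (\<lambda>s. (F ^^ n) (\<gamma> s))"
    by (rule ext) (simp only: funpow.simps o_apply)
  show ?case unfolding eq tang.simps by (rule ch)
qed

lemma coneA_zero: "coneA vL w 0 = 0" unfolding coneA_def by simp

lemma inner_coneA: "vL \<bullet> w \<noteq> 0 \<Longrightarrow> vL \<bullet> v = coneA vL w v * (vL \<bullet> w)"
  unfolding coneA_def by simp

lemma cone_iter: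
  assumes cs: "cone_system DF w vL K \<alpha>"
    and a0: "coneA vL w v \<noteq> 0" and b0: "norm (coneB vL w v) \<le> \<alpha> * \<bar>coneA vL w v\<bar>"
  shows "coneA vL w (tang DF F x v n) \<noteq> 0 \<and>
         norm (coneB vL w (tang DF F x v n)) \<le> \<alpha> * \<bar>coneA vL w (tang DF F x v n)\<bar> \<and>
         \<bar>coneA vL w (tang DF F x v n)\<bar> \<ge> K ^ n * \<bar>coneA vL w v\<bar>"
proof (induction n)
  case 0 then show ?case using a0 b0 by simp
next
  case (Suc n)
  define u where "u = tang DF F x v n"
  have K: "K > 1" using cs unfolding cone_system_def by simp
  have u0: "u \<noteq> 0" using Suc coneA_zero unfolding u_def by metis
  have "norm (coneB vL w (DF ((F ^^ n) x) *v u)) < \<alpha> * \<bar>coneA vL w (DF ((F ^^ n) x) *v u)\<bar> \<and>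
        \<bar>coneA vL w (DF ((F ^^ n) x) *v u)\<bar> > K * \<bar>coneA vL w u\<bar>"
    using cs u0 Suc unfolding cone_system_def u_def by blast
  moreover have "K * \<bar>coneA vL w u\<bar> \<ge> K * (K ^ n * \<bar>coneA vL w v\<bar>)"
    using Suc K unfolding u_def by (intro mult_left_mono) auto
  moreover have "K * \<bar>coneA vL w u\<bar> \<ge> 0" using K by simp
  ultimately show ?case unfolding u_def by auto
qed

lemma G_bounded:
  fixes G :: "real^'n \<Rightarrow> real^'n"
  assumes G_cont: "continuous_on UNIV G"
    and G_per: "\<forall>x z. int_vec z \<longrightarrow> G (x + z) = G x"
  shows "\<exists>B. \<forall>x. norm (G x) \<le> B"
proof -
  define one :: "real^'n" where "one = (\<chi> i. 1)"
  have "compact (G ` cbox 0 one)"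
    by (intro compact_continuous_image continuous_on_subset[OF G_cont]) auto
  then obtain B where B: "\<forall>y\<in>G ` cbox 0 one. norm y \<le> B"
    using compact_imp_bounded bounded_iff by metis
  have "norm (G x) \<le> B" for x
  proof -
    define z :: "real^'n" where "z = (\<chi> i. of_int \<lfloor>x $ i\<rfloor>)"
    have iz: "int_vec z" unfolding int_vec_def z_def by simp
    have "x - z \<in> cbox 0 one"
      unfolding mem_box_cart one_def z_def
      by (auto simp: of_int_floor_le) (smt (verit) real_of_int_floor_add_one_gt)
    moreover have "G x = G (x - z)" using G_per iz by (metis diff_add_cancel)
    ultimately show ?thesis using B by auto
  qed
  then show ?thesis by blast
qed

lemma kmin_pos:
  fixes vL :: "real^'n"
  assumes "int_vec vL" "vL \<noteq> 0"
  shows "kmin vL \<ge> 1"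
proof -
  have intv: "vL \<bullet> x \<in> \<int>" if "int_vec x" for x
    using assms(1) that unfolding int_vec_def inner_vec_def
    by (intro Ints_sum Ints_mult) auto
  have ne: "{\<bar>vL \<bullet> x\<bar> | x. int_vec x \<and> vL \<bullet> x \<noteq> 0} \<noteq> {}"
    using assms by auto
  show ?thesis unfolding kmin_def
    by (rule cInf_greatest[OF ne]) (auto dest!: intv intro: Ints_nonzero_abs_ge1)
qed


theorem mainTheorem5:
  fixes M :: "real^'n^'n" and G :: "real^'n \<Rightarrow> real^'n"
    and DF :: "real^'n \<Rightarrow> real^'n^'n"
    and m :: int and vR vL :: "real^'n" and K \<alpha> :: real
  assumes M_int: "\<forall>i j. M $ i $ j \<in> \<int>"
    and G_cont: "continuous_on UNIV G"
    and G_per: "\<forall>x z. int_vec z \<longrightarrow> G (x + z) = G x"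
    and F_deriv: "\<forall>x. ((\<lambda>y. M *v y + G y) has_derivative (\<lambda>v. DF x *v v)) (at x)"
    and DF_cont: "continuous_on UNIV DF"
    and DF_inv: "\<forall>x. invertible (DF x)"
    and m_gt: "\<bar>m\<bar> > 1"
    and vR_eig: "vR \<noteq> 0" "M *v vR = real_of_int m *\<^sub>R vR"
    and vL_eig: "vL \<noteq> 0" "vL v* M = real_of_int m *\<^sub>R vL"
    and vL_int: "int_vec vL"
    and cone: "cone_system DF (vR /\<^sub>R norm vR) vL K \<alpha>"
  shows "\<forall>x0 p q. p \<noteq> q \<and> hatPhi M G vL m p = x0 \<and> hatPhi M G vL m q = x0 \<longrightarrow>
           \<not> (\<exists>\<gamma>. horizontal_curve_joining vL (vR /\<^sub>R norm vR) \<alpha> \<gamma> p q)"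
proof (intro allI impI notI)
  fix x0 p q
  assume pq: "p \<noteq> q \<and> hatPhi M G vL m p = x0 \<and> hatPhi M G vL m q = x0"
  assume "\<exists>\<gamma>. horizontal_curve_joining vL (vR /\<^sub>R norm vR) \<alpha> \<gamma> p q"
  then obtain \<gamma> where hc: "horizontal_curve_joining vL (vR /\<^sub>R norm vR) \<alpha> \<gamma> p q" by blast
  define w where "w = vR /\<^sub>R norm vR"
  define F where "F = (\<lambda>y. M *v y + G y)"
  define mr where "mr = real_of_int m"
  have mr: "\<bar>mr\<bar> > 1" unfolding mr_def using m_gt by linarith
  have Kw: "K > 1 \<and> vL \<bullet> (vR /\<^sub>R norm vR) \<noteq> 0" using cone unfolding cone_system_def by blast
  have K: "K > 1" and vLw: "vL \<bullet> w \<noteq> 0" using Kw unfolding w_def by auto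
  obtain B where B: "\<forall>x. norm (G x) \<le> B" using G_bounded[OF G_cont G_per] by blast
  define Bg where "Bg = norm vL * B"
  have gB: "\<bar>vL \<bullet> G x\<bar> \<le> Bg" for x
  proof -
    have "\<bar>vL \<bullet> G x\<bar> \<le> norm vL * norm (G x)" by (rule Cauchy_Schwarz_ineq2)
    also have "\<dots> \<le> norm vL * B" using B by (intro mult_left_mono) auto
    finally show ?thesis unfolding Bg_def .
  qed
  have Frec: "vL \<bullet> F y = mr * (vL \<bullet> y) + vL \<bullet> G y" for y
    unfolding F_def mr_def inner_add_right dot_lmul_matrix[symmetric] vL_eig(2) by simp
  define u where "u x n = vL \<bullet> (F ^^ n) x" for x n
  have urec: "\<bar>u x (Suc n) - mr * u x n\<bar> \<le> Bg" for x n
    unfolding u_def using Frec gB by simp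
  have conv: "convergent (\<lambda>n. u x n / mr ^ n)" for x
    using conv_lemma[of "u x" mr Bg] urec mr by blast
  have k1: "kmin vL \<ge> 1" using kmin_pos vL_int vL_eig(1) by blast
  have "hatPhi M G vL m q = hatPhi M G vL m p" using pq by simp
  hence "(1 / kmin vL) * lim (\<lambda>n. u q n / mr ^ n) = (1 / kmin vL) * lim (\<lambda>n. u p n / mr ^ n)"
    unfolding hatPhi_def u_def mr_def F_def .
  hence limeq: "lim (\<lambda>n. u q n / mr ^ n) = lim (\<lambda>n. u p n / mr ^ n)"
    using k1 by simp
  define E where "E n = u q n - u p n" for n
  have E0: "(\<lambda>n. E n / mr ^ n) \<longlonglongrightarrow> 0"
  proof -
    have "(\<lambda>n. u q n / mr ^ n - u p n / mr ^ n) \<longlonglongrightarrow> lim (\<lambda>n. u q n / mr ^ n) - lim (\<lambda>n. u p n / mr ^ n)"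
      using conv by (intro tendsto_diff) (auto simp: convergent_LIMSEQ_iff)
    then show ?thesis unfolding E_def limeq by (simp add: diff_divide_distrib)
  qed
  have Erec: "\<forall>n. \<bar>E (Suc n) - mr * E n\<bar> \<le> 2 * Bg"
  proof
    fix n
    have "E (Suc n) - mr * E n = (u q (Suc n) - mr * u q n) - (u p (Suc n) - mr * u p n)"
      unfolding E_def by (simp add: algebra_simps)
    then show "\<bar>E (Suc n) - mr * E n\<bar> \<le> 2 * Bg" using urec[of q n] urec[of p n] by linarith
  qed
  have Ebd: "\<bar>E n\<bar> \<le> 2 * Bg / (\<bar>mr\<bar> - 1)" for n
    using growth_bound[OF Erec mr E0] .
  from hc have g01: "\<gamma> 0 = p" "\<gamma> 1 = q"
    and hv: "\<forall>t\<in>{0..1}. \<exists>v. (\<gamma> has_vector_derivative v) (at t within {0..1}) \<and>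
        norm (coneB vL w v) < \<alpha> * \<bar>coneA vL w v\<bar>"
    unfolding horizontal_curve_joining_def w_def by blast+
  from bchoice[OF hv] obtain V where V0: "\<forall>t\<in>{0..1}. (\<gamma> has_vector_derivative V t) (at t within {0..1}) \<and>
        norm (coneB vL w (V t)) < \<alpha> * \<bar>coneA vL w (V t)\<bar>"
    by blast
  note V = V0[rule_format]
  define h where "h n t = vL \<bullet> (F ^^ n) (\<gamma> t)" for n t
  define d where "d n t = vL \<bullet> tang DF F (\<gamma> t) (V t) n" for n t
  have Fd: "\<forall>x. (F has_derivative (\<lambda>v. DF x *v v)) (at x)" using F_deriv unfolding F_def by simp
  have hder: "\<forall>t\<in>{0..1}. (h n has_real_derivative d n t) (at t within {0..1})" for n
  proof
    fix t :: real assume t: "t \<in> {0..1}"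
    have vd: "((\<lambda>s. (F ^^ n) (\<gamma> s)) has_vector_derivative tang DF F (\<gamma> t) (V t) n) (at t within {0..1})"
      using iter_deriv[OF Fd, of \<gamma> "V t" t "{0..1}" n] V[OF t] by blast
    have "(inner vL has_derivative inner vL) (at ((\<lambda>s. (F ^^ n) (\<gamma> s)) t) within (\<lambda>s. (F ^^ n) (\<gamma> s)) ` {0..1})"
      by (intro bounded_linear_imp_has_derivative bounded_linear_inner_right)
    from vector_derivative_diff_chain_within[OF vd this]
    show "(h n has_real_derivative d n t) (at t within {0..1})"
      unfolding h_def d_def has_real_derivative_iff_has_vector_derivative by (simp only: o_def)
  qed
  have dprop: "d 0 t \<noteq> 0 \<and> \<bar>d n t\<bar> \<ge> K ^ n * \<bar>d 0 t\<bar>" if t: "t \<in> {0..1}" for n t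
  proof -
    have s: "norm (coneB vL w (V t)) < \<alpha> * \<bar>coneA vL w (V t)\<bar>" using V[OF t] by blast
    have a0: "coneA vL w (V t) \<noteq> 0"
    proof
      assume "coneA vL w (V t) = 0" then show False using s by simp
    qed
    have cone': "cone_system DF w vL K \<alpha>" using cone unfolding w_def .
    have ci: "\<bar>coneA vL w (tang DF F (\<gamma> t) (V t) n)\<bar> \<ge> K ^ n * \<bar>coneA vL w (V t)\<bar>"
      using cone_iter[OF cone' a0 less_imp_le[OF s], of F "\<gamma> t" n] by blast
    have "\<bar>d n t\<bar> = \<bar>coneA vL w (tang DF F (\<gamma> t) (V t) n)\<bar> * \<bar>vL \<bullet> w\<bar>"
      unfolding d_def using inner_coneA[OF vLw, of "tang DF F (\<gamma> t) (V t) n"] by (simp add: abs_mult)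
    moreover have "\<bar>d 0 t\<bar> = \<bar>coneA vL w (V t)\<bar> * \<bar>vL \<bullet> w\<bar>"
      unfolding d_def using inner_coneA[OF vLw, of "V t"] by (simp add: abs_mult)
    moreover have "\<bar>coneA vL w (V t)\<bar> * \<bar>vL \<bullet> w\<bar> \<noteq> 0" using a0 vLw by simp
    moreover have "K ^ n * \<bar>coneA vL w (V t)\<bar> * \<bar>vL \<bullet> w\<bar> \<le> \<bar>coneA vL w (tang DF F (\<gamma> t) (V t) n)\<bar> * \<bar>vL \<bullet> w\<bar>"
      using ci by (rule mult_right_mono) simp
    ultimately show ?thesis
      by (metis abs_zero mult.assoc)
  qed
  define c0 where "c0 = \<bar>h 0 1 - h 0 0\<bar>"
  have c0: "c0 > 0"
  proof -
    have "\<forall>t\<in>{0..1}. ((\<lambda>t. t) has_real_derivative 1) (at t within {0..1})"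
      by (auto intro!: derivative_eq_intros)
    from rolle_ratio[OF hder[of 0] this] obtain z where z: "0 < z" "z < 1"
      "(h 0 1 - h 0 0) * 1 = (1 - 0) * d 0 z" by blast
    then show ?thesis using dprop[of z 0] unfolding c0_def by auto
  qed
  have Elow: "\<bar>E n\<bar> \<ge> K ^ n * c0" for n
  proof -
    from rolle_ratio[OF hder[of n] hder[of 0]] obtain z where z: "0 < z" "z < 1"
      "(h n 1 - h n 0) * d 0 z = (h 0 1 - h 0 0) * d n z" by blast
    have En: "E n = h n 1 - h n 0" unfolding E_def u_def h_def g01 by simp
    have dz: "d 0 z \<noteq> 0" "\<bar>d n z\<bar> \<ge> K ^ n * \<bar>d 0 z\<bar>" using dprop[of z n] z by auto
    have "\<bar>E n\<bar> * \<bar>d 0 z\<bar> = c0 * \<bar>d n z\<bar>"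
      using z(3) unfolding En c0_def by (metis abs_mult)
    also have "\<dots> \<ge> c0 * (K ^ n * \<bar>d 0 z\<bar>)" using dz c0 by (intro mult_left_mono) auto
    finally have "(K ^ n * c0) * \<bar>d 0 z\<bar> \<le> \<bar>E n\<bar> * \<bar>d 0 z\<bar>" by (simp add: algebra_simps)
    then show ?thesis using dz by simp
  qed
  obtain n where n: "2 * Bg / (\<bar>mr\<bar> - 1) / c0 < K ^ n" using real_arch_pow[OF K] by blast
  hence "2 * Bg / (\<bar>mr\<bar> - 1) < K ^ n * c0" using pos_divide_less_eq[OF c0] by blast
  with Elow[of n] Ebd[of n] show False by linarith
qed

end
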